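(* Let $X\in\mathbb{R}^{m\times n}$ be fixed, $V=\frac1nXX^\top$, $W^K,W^Q\in\mathbb{R}^{n\times n_k}$ and $W\in\mathbb{R}^{n\times n}$ independent with i.i.d. $\mathcal N(0,1)$ entries, $Y=\frac1nXW^KW^{Q,\top}X^\top$, $\tau>0$, $A=I+\mathrm{Softmax}(\tau^{-1}Y)-\frac1m\mathbf 1\mathbf 1^\top$ (Softmax row-wise), and $$\mathcal T_1^{\alpha\beta}=\frac1n\big(XW^\top X^\top A^\top+AXWX^\top\big)^{\alpha\beta}.$$ Then $\mathbb{E}[\mathcal T_1^{\alpha\beta}]=0$ and $$\mathbb{E}[\mathcal T_1^{\alpha\beta}\mathcal T_1^{\delta\omega}]=2\big(V^{\alpha\delta}V^{\beta\omega}+V^{\alpha\omega}V^{\beta\delta}\big)+O(n_k\tau^{-2}).$$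
   Context: $O(n_k\tau^{-2})$ denotes a remainder bounded by a constant (independent of $\tau$) times $n_k\tau^{-2}$ as $\tau\to\infty$. *)

theory Defs
  imports "HOL-Probability.Probability"
begin

text \<open>Matrices are represented as functions nat => nat => real, with the
relevant index bounds made explicit in every sum (0-based indices).\<close>

text \<open>Index set of the Gaussian entries: WK i k, WQ i k (i < n, k < nk), and W i j (i,j < n).\<close>
datatype gidx = GK nat nat | GQ nat nat | GW nat nat

definition gauss_index :: "nat \<Rightarrow> nat \<Rightarrow> gidx set" where
  "gauss_index n nk =
     {GK i k | i k. i < n \<and> k < nk} \<union> {GQ i k | i k. i < n \<and> k < nk} \<union> {GW i j | i j. i < n \<and> j < n}"

definition Vmat :: "nat \<Rightarrow> (nat \<Rightarrow> nat \<Rightarrow> real) \<Rightarrow> nat \<Rightarrow> nat \<Rightarrow> real" where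
  "Vmat n X a b = (1 / real n) * (\<Sum>i<n. X a i * X b i)"

definition Ymat :: "nat \<Rightarrow> nat \<Rightarrow> (nat \<Rightarrow> nat \<Rightarrow> real) \<Rightarrow> (nat \<Rightarrow> nat \<Rightarrow> real)
    \<Rightarrow> (nat \<Rightarrow> nat \<Rightarrow> real) \<Rightarrow> nat \<Rightarrow> nat \<Rightarrow> real" where
  "Ymat n nk X WK WQ a b =
     (1 / real n) * (\<Sum>i<n. \<Sum>j<n. \<Sum>k<nk. X a i * WK i k * WQ j k * X b j)"

definition softmax_rows :: "nat \<Rightarrow> (nat \<Rightarrow> nat \<Rightarrow> real) \<Rightarrow> nat \<Rightarrow> nat \<Rightarrow> real" where
  "softmax_rows m Z a b = exp (Z a b) / (\<Sum>c<m. exp (Z a c))"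

definition Amat :: "nat \<Rightarrow> nat \<Rightarrow> nat \<Rightarrow> (nat \<Rightarrow> nat \<Rightarrow> real) \<Rightarrow> (nat \<Rightarrow> nat \<Rightarrow> real)
    \<Rightarrow> (nat \<Rightarrow> nat \<Rightarrow> real) \<Rightarrow> real \<Rightarrow> nat \<Rightarrow> nat \<Rightarrow> real" where
  "Amat m n nk X WK WQ \<tau> a b =
     (if a = b then 1 else 0)
     + softmax_rows m (\<lambda>c d. Ymat n nk X WK WQ c d / \<tau>) a b
     - 1 / real m"

definition T1 :: "nat \<Rightarrow> nat \<Rightarrow> nat \<Rightarrow> (nat \<Rightarrow> nat \<Rightarrow> real) \<Rightarrow> (nat \<Rightarrow> nat \<Rightarrow> real)
    \<Rightarrow> (nat \<Rightarrow> nat \<Rightarrow> real) \<Rightarrow> (nat \<Rightarrow> nat \<Rightarrow> real) \<Rightarrow> real \<Rightarrow> nat \<Rightarrow> nat \<Rightarrow> real" where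
  "T1 m n nk X WK WQ W \<tau> a b =
     (let A = Amat m n nk X WK WQ \<tau> in
      (1 / real n) *
        ((\<Sum>i<n. \<Sum>j<n. \<Sum>c<m. X a i * W j i * X c j * A b c)
       + (\<Sum>c<m. \<Sum>i<n. \<Sum>j<n. A a c * X c i * W i j * X b j)))"

end

theory Submission
  imports Defs
begin



lemma comp_meas[measurable]:
  "(\<lambda>x. x j) \<in> borel_measurable (PiM K (\<lambda>_. (borel::real measure)))"
proof (cases "j \<in> K")
  case True then show ?thesis by (rule measurable_component_singleton)
next
  case False
  have "(\<lambda>x. x j) \<in> borel_measurable (PiM K (\<lambda>_. (borel::real measure))) \<longleftrightarrow>
        (\<lambda>x. undefined::real) \<in> borel_measurable (PiM K (\<lambda>_. (borel::real measure)))"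
    by (rule measurable_cong) (use False in \<open>auto simp: space_PiM PiE_def extensional_def\<close>)
  then show ?thesis by simp
qed

lemma abs_int_le:
  fixes f g :: "_ \<Rightarrow> real"
  assumes "integrable M f" "integrable M g" "\<And>x. x \<in> space M \<Longrightarrow> \<bar>f x\<bar> \<le> g x"
  shows "\<bar>integral\<^sup>L M f\<bar> \<le> integral\<^sup>L M g"
proof -
  have "\<bar>integral\<^sup>L M f\<bar> \<le> (\<integral>x. \<bar>f x\<bar> \<partial>M)"
    using integral_norm_bound[of M f] by simp
  also have "\<dots> \<le> integral\<^sup>L M g"
    using assms by (intro integral_mono) auto
  finally show ?thesis .
qed

lemma exp_quad:
  fixes x :: real assumes "\<bar>x\<bar> \<le> 1"
  shows "\<bar>exp x - 1 - x\<bar> \<le> x\<^sup>2"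
proof (cases "x \<ge> 0")
  case True
  have "1 + x \<le> exp x" by simp
  moreover have "0 \<le> x\<^sup>2" by simp
  ultimately show ?thesis using exp_bound[of x] assms True unfolding abs_le_iff by linarith
next
  case False
  define y where "y = - x"
  have y: "0 < y" "y \<le> 1" using False assms by (auto simp: y_def)
  have e1: "1 + y/2 \<le> exp (y/2)" by (rule exp_ge_add_one_self)
  have "exp (-y/2) = inverse (exp (y/2))" by (simp add: exp_minus)
  hence e2: "exp (-y/2) \<le> 1 / (1 + y/2)" using e1 y
    by (simp add: inverse_eq_divide frac_le)
  have e3: "exp x = (exp (-y/2))\<^sup>2" by (simp add: y_def power2_eq_square exp_add[symmetric])
  have "exp x \<le> (1 / (1 + y/2))\<^sup>2" unfolding e3 using e2 by (intro power_mono) auto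
  also have "\<dots> \<le> 1 - y + y\<^sup>2"
  proof -
    have "(1 + y/2)\<^sup>2 * (1 - y + y\<^sup>2) = 1 + y\<^sup>2/4 + 3*y^3/4 + y^4/4"
      by (simp add: power2_eq_square power3_eq_cube power4_eq_xxxx field_simps)
    also have "\<dots> \<ge> 1" using y by simp
    finally have "1 \<le> (1 + y/2)\<^sup>2 * (1 - y + y\<^sup>2)" .
    then show ?thesis using y by (simp add: divide_simps power_divide mult.commute)
  qed
  finally have "exp x - 1 - x \<le> x\<^sup>2" by (simp add: y_def)
  moreover have "0 \<le> exp x - 1 - x" using exp_ge_add_one_self[of x] by linarith
  ultimately show ?thesis by simp
qed




lemma softmax_identity:
  fixes S eb zb Z U ub m :: real
  assumes "m > 0" "S = m + Z + U" "eb = 1 + zb + ub" "S \<noteq> 0"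
  shows "eb / S - 1/m - (zb - Z/m)/m = (m*ub - U - (zb - Z/m)*(Z+U)) / (m*S)"
proof -
  have m0: "m \<noteq> 0" using assms by simp
  have 1: "eb / S - 1/m - (zb - Z/m)/m = (m*eb - S - (zb - Z/m)*S) / (m*S)"
    using m0 assms(4) by (simp add: field_simps)
  have 2: "m*eb - S - (zb - Z/m)*S = m*ub - U - (zb - Z/m)*(Z+U)"
    using m0 assms(2,3) by (simp add: field_simps)
  show ?thesis using 1 2 by simp
qed

lemma frac_bound:
  fixes a d B :: real
  assumes "\<bar>a\<bar> \<le> B" "d \<ge> D" "D > 0"
  shows "\<bar>a / d\<bar> \<le> B / D"
proof -
  have "d > 0" using assms by simp
  have "\<bar>a / d\<bar> = \<bar>a\<bar> / d" using \<open>d>0\<close> by simp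
  also have "\<dots> \<le> B / d" using assms \<open>d>0\<close> by (simp add: divide_right_mono)
  also have "\<dots> \<le> B / D" using assms \<open>d>0\<close> \<open>\<bar>a\<bar> \<le> B\<close>
    by (intro divide_left_mono) auto
  finally show ?thesis .
qed

lemma softmax_est:
  fixes z :: "nat \<Rightarrow> real" and m :: nat and M :: real
  assumes m: "m \<ge> 1" and b: "b < m" and M: "0 \<le> M" and zM: "\<And>c. c < m \<Longrightarrow> \<bar>z c\<bar> \<le> M"
  shows "\<bar>exp (z b) / (\<Sum>c<m. exp (z c)) - 1/m\<bar> \<le> 20 * M"
    and "\<bar>exp (z b) / (\<Sum>c<m. exp (z c)) - 1/m - (z b - (\<Sum>c<m. z c)/m)/m\<bar> \<le> 20 * M\<^sup>2"
proof -
  define S where "S = (\<Sum>c<m. exp (z c))"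
  define Z where "Z = (\<Sum>c<m. z c)"
  have mpos: "real m > 0" "real m \<ge> 1" using m by auto
  have Spos: "S > 0" unfolding S_def using b by (intro sum_pos) auto
  have ebS: "exp (z b) \<le> S" unfolding S_def using b
    by (intro member_le_sum) auto
  have s01: "0 < exp (z b) / S" "exp (z b) / S \<le> 1" using Spos ebS by auto
  have m1: "0 < 1 / real m" "1 / real m \<le> 1" using mpos by auto
  have sabs: "\<bar>exp (z b) / S - 1/m\<bar> \<le> 1" using s01 m1 by linarith
  have Zb: "\<bar>Z\<bar> \<le> m * M"
  proof -
    have "\<bar>Z\<bar> \<le> (\<Sum>c<m. \<bar>z c\<bar>)" unfolding Z_def by (rule sum_abs)
    also have "\<dots> \<le> (\<Sum>c<m. M)" using zM by (intro sum_mono) auto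
    finally show ?thesis by simp
  qed
  have ZmM: "\<bar>Z / m\<bar> \<le> M" using Zb mpos by (simp add: divide_simps mult.commute)
  have zbM: "\<bar>z b\<bar> \<le> M" using zM b by simp
  have Lb: "\<bar>z b - Z/m\<bar> \<le> 2*M" using ZmM zbM by linarith
  have Lb2: "\<bar>(z b - Z/m)/m\<bar> \<le> 2*M"
  proof -
    have "\<bar>(z b - Z/m)/m\<bar> = \<bar>z b - Z/m\<bar> / m" by simp
    also have "\<dots> \<le> \<bar>z b - Z/m\<bar>" using mpos by (simp add: divide_le_eq mult_le_cancel_left1)
    finally show ?thesis using Lb by simp
  qed
  have main: "\<bar>exp (z b) / S - 1/m - (z b - Z/m)/m\<bar> \<le> 18 * M\<^sup>2" if M1: "M \<le> 1"
  proof -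
    define u where "u c = exp (z c) - 1 - z c" for c
    define U where "U = (\<Sum>c<m. u c)"
    have uM: "\<bar>u c\<bar> \<le> M\<^sup>2" if "c < m" for c
    proof -
      have "\<bar>z c\<bar> \<le> 1" using zM[OF that] M1 by simp
      then have "\<bar>u c\<bar> \<le> (z c)\<^sup>2" unfolding u_def by (rule exp_quad)
      also have "(z c)\<^sup>2 = \<bar>z c\<bar>\<^sup>2" by simp
      also have "\<dots> \<le> M\<^sup>2" using zM[OF that] by (intro power_mono) auto
      finally show ?thesis .
    qed
    have Ub: "\<bar>U\<bar> \<le> m * M\<^sup>2"
    proof -
      have "\<bar>U\<bar> \<le> (\<Sum>c<m. \<bar>u c\<bar>)" unfolding U_def by (rule sum_abs)
      also have "\<dots> \<le> (\<Sum>c<m. M\<^sup>2)" using uM by (intro sum_mono) auto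
      finally show ?thesis by simp
    qed
    have SE: "S = m + Z + U" unfolding S_def Z_def U_def u_def
      by (simp add: sum.distrib sum_subtractf)
    have eb: "exp (z b) = 1 + z b + u b" unfolding u_def by simp
    have S3: "S \<ge> m / 3"
    proof -
      have e1: "exp (-1::real) \<ge> 1/3" using exp_le by (simp add: exp_minus divide_simps)
      have "(\<Sum>c<m. (1/3::real)) \<le> S" unfolding S_def
      proof (intro sum_mono)
        fix c assume "c \<in> {..<m}"
        then have "-1 \<le> z c" using zM[of c] M1 by auto
        then have "exp (-1) \<le> exp (z c)" by simp
        then show "1/3 \<le> exp (z c)" using e1 by linarith
      qed
      then show ?thesis by simp
    qed
    have m3: "m * S \<ge> m * (m/3)" using S3 mpos by (intro mult_left_mono) auto
    have m3': "m * (m/3) > 0" using mpos by simp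
    have "exp (z b) / S - 1/m - (z b - Z/m)/m = (m*u b - U - (z b - Z/m)*(Z+U)) / (m*S)"
      using mpos Spos SE eb by (intro softmax_identity) auto
    also have "\<bar>\<dots>\<bar> \<le> (6 * m * M\<^sup>2) / (m * (m/3))"
    proof (rule frac_bound[OF _ m3 m3'])
      have ubb: "\<bar>u b\<bar> \<le> M\<^sup>2" using uM b by simp
      have t1: "\<bar>m * u b\<bar> \<le> m * M\<^sup>2" using ubb mpos by (simp add: abs_mult mult_left_mono)
      have ZU: "\<bar>Z + U\<bar> \<le> 2 * m * M"
      proof -
        have "M\<^sup>2 \<le> M" using M M1 by (simp add: power2_eq_square mult_left_le_one_le)
        then have "m * M\<^sup>2 \<le> m * M" using mpos by (simp add: mult_left_mono)
        then show ?thesis using Zb Ub by linarith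
      qed
      have t2: "\<bar>(z b - Z/m)*(Z+U)\<bar> \<le> (2*M) * (2*m*M)"
        unfolding abs_mult by (intro mult_mono Lb ZU) (use M in auto)
      have "\<bar>m*u b - U - (z b - Z/m)*(Z+U)\<bar> \<le> m * M\<^sup>2 + m * M\<^sup>2 + (2*M) * (2*m*M)"
        using t1 Ub t2 by linarith
      also have "\<dots> = 6 * m * M\<^sup>2" by (simp add: power2_eq_square algebra_simps)
      finally show "\<bar>m*u b - U - (z b - Z/m)*(Z+U)\<bar> \<le> 6 * m * M\<^sup>2" .
    qed
    also have "(6 * m * M\<^sup>2) / (m * (m/3)) = 18 * M\<^sup>2 / m" using mpos by (simp add: field_simps)
    also have "\<dots> \<le> 18 * M\<^sup>2" using mpos by (simp add: divide_le_eq mult_le_cancel_left1)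
    finally show ?thesis .
  qed
  have A: "\<bar>exp (z b) / S - 1/m\<bar> \<le> 20 * M"
  proof (cases "M \<le> 1")
    case True
    have "M\<^sup>2 \<le> M" using M True by (simp add: power2_eq_square mult_left_le_one_le)
    moreover have "\<bar>exp (z b) / S - 1/m\<bar> \<le> \<bar>exp (z b) / S - 1/m - (z b - Z/m)/m\<bar> + \<bar>(z b - Z/m)/m\<bar>"
      using abs_triangle_ineq[of "exp (z b) / S - 1/m - (z b - Z/m)/m" "(z b - Z/m)/m"] by simp
    ultimately show ?thesis using main[OF True] Lb2 M by linarith
  next
    case False then show ?thesis using sabs by linarith
  qed
  have B: "\<bar>exp (z b) / S - 1/m - (z b - Z/m)/m\<bar> \<le> 20 * M\<^sup>2"
  proof (cases "M \<le> 1")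
    case True
    show ?thesis by (rule order_trans[OF main[OF True]]) simp
  next
    case False
    then have "M \<le> M\<^sup>2" by (simp add: power2_eq_square)
    moreover have "\<bar>exp (z b) / S - 1/m - (z b - Z/m)/m\<bar> \<le> \<bar>exp (z b) / S - 1/m\<bar> + \<bar>(z b - Z/m)/m\<bar>"
      by (rule abs_triangle_ineq4)
    moreover have "\<And>x y w::real. x \<le> y + w \<Longrightarrow> y \<le> 1 \<Longrightarrow> w \<le> 2*M \<Longrightarrow> M \<le> M\<^sup>2 \<Longrightarrow> x \<le> 20*M\<^sup>2"
      using False by linarith
    ultimately show ?thesis using sabs Lb2 by blast
  qed
  show "\<bar>exp (z b) / (\<Sum>c<m. exp (z c)) - 1/m\<bar> \<le> 20 * M" using A unfolding S_def .
  show "\<bar>exp (z b) / (\<Sum>c<m. exp (z c)) - 1/m - (z b - (\<Sum>c<m. z c)/m)/m\<bar> \<le> 20 * M\<^sup>2"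
    using B unfolding S_def Z_def .
qed




lemma ab_le: "\<bar>a*b\<bar> \<le> a\<^sup>2 + (b::real)\<^sup>2"
proof -
  have "0 \<le> (\<bar>a\<bar> - \<bar>b\<bar>)\<^sup>2" by simp
  then have "2*(\<bar>a\<bar>*\<bar>b\<bar>) \<le> \<bar>a\<bar>\<^sup>2 + \<bar>b\<bar>\<^sup>2" by (simp add: power2_eq_square algebra_simps)
  moreover have "0 \<le> \<bar>a\<bar>*\<bar>b\<bar>" by simp
  moreover have "\<bar>a\<bar>\<^sup>2 = a\<^sup>2" "\<bar>b\<bar>\<^sup>2 = b\<^sup>2" by simp_all
  ultimately show ?thesis unfolding abs_mult by linarith
qed

locale gsetup = prob_space M for M :: "'s measure" +
  fixes G :: "gidx \<Rightarrow> 's \<Rightarrow> real" and I :: "gidx set"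
  assumes ind: "indep_vars (\<lambda>_. borel) G I"
    and gauss: "\<And>g. g \<in> I \<Longrightarrow> distributed M lborel (G g) std_normal_density"
begin

lemma Gmeas: "g \<in> I \<Longrightarrow> G g \<in> borel_measurable M"
  using ind unfolding indep_vars_def by auto

lemma int1: "g \<in> I \<Longrightarrow> integrable M (G g)"
  using distributed_integrable_var[OF gauss] integrable_std_normal_moment[of 1]
  by (simp add: normal_density_nonneg)

lemma mean0: "g \<in> I \<Longrightarrow> expectation (G g) = 0"
  using standard_normal_distributed_expectation[OF gauss] .

lemma int2: "g \<in> I \<Longrightarrow> integrable M (\<lambda>s. (G g s)\<^sup>2)"
  using distributed_integrable[OF gauss, of g "\<lambda>x. x\<^sup>2"] integrable_std_normal_moment[of 2]
  by (simp add: normal_density_nonneg)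

lemma sq1: "g \<in> I \<Longrightarrow> expectation (\<lambda>s. (G g s)\<^sup>2) = 1"
  using distributed_integral[OF gauss, of g "\<lambda>x. x\<^sup>2"] integral_std_normal_moment_even[of 1]
  by (simp add: normal_density_nonneg)

lemma intgg: "g \<in> I \<Longrightarrow> h \<in> I \<Longrightarrow> integrable M (\<lambda>s. G g s * G h s)"
proof -
  assume g: "g \<in> I" and h: "h \<in> I"
  show ?thesis
  proof (rule Bochner_Integration.integrable_bound[OF Bochner_Integration.integrable_add[OF int2[OF g] int2[OF h]]])
    show "(\<lambda>s. G g s * G h s) \<in> borel_measurable M" using Gmeas[OF g] Gmeas[OF h] by measurable
    show "AE x in M. norm (G g x * G h x) \<le> norm ((G g x)\<^sup>2 + (G h x)\<^sup>2)"
      using ab_le by (auto intro!: AE_I2 simp: abs_le_iff)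
  qed
qed

lemma block:
  fixes f g :: "(gidx \<Rightarrow> real) \<Rightarrow> real" and FA FB :: "'s \<Rightarrow> real"
  assumes KL: "K \<inter> L = {}" "K \<subseteq> I" "L \<subseteq> I"
    and f: "f \<in> borel_measurable (PiM K (\<lambda>_. borel))"
    and g: "g \<in> borel_measurable (PiM L (\<lambda>_. borel))"
    and FA: "\<And>s. FA s = f (restrict (\<lambda>i. G i s) K)"
    and FB: "\<And>s. FB s = g (restrict (\<lambda>i. G i s) L)"
    and i1: "integrable M FA" and i2: "integrable M FB"
  shows "integrable M (\<lambda>s. FA s * FB s)"
    and "(\<integral>s. FA s * FB s \<partial>M) = (\<integral>s. FA s \<partial>M) * (\<integral>s. FB s \<partial>M)"
proof -
  have F1e: "FA = f \<circ> (\<lambda>s. restrict (\<lambda>i. G i s) K)" using FA by (auto simp: fun_eq_iff)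
  have F2e: "FB = g \<circ> (\<lambda>s. restrict (\<lambda>i. G i s) L)" using FB by (auto simp: fun_eq_iff)
  have iv: "indep_var borel FA borel FB" unfolding F1e F2e
    by (rule indep_var_compose[OF indep_var_restrict[OF ind KL] f g])
  show "integrable M (\<lambda>s. FA s * FB s)" by (rule indep_var_integrable[OF iv i1 i2])
  show "(\<integral>s. FA s * FB s \<partial>M) = (\<integral>s. FA s \<partial>M) * (\<integral>s. FB s \<partial>M)"
    by (rule indep_var_lebesgue_integral[OF iv i1 i2])
qed

lemma prod_mean0: "g \<in> I \<Longrightarrow> h \<in> I \<Longrightarrow> g \<noteq> h \<Longrightarrow> expectation (\<lambda>s. G g s * G h s) = 0"
  using block(2)[of "{g}" "{h}" "\<lambda>x. x g" "\<lambda>x. x h" "G g" "G h"] int1 mean0 by auto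

lemma prod_sq: "g \<in> I \<Longrightarrow> expectation (\<lambda>s. G g s * G g s) = 1"
  using sq1 by (simp add: power2_eq_square)

end



definition Fc :: "nat \<Rightarrow> nat \<Rightarrow> (nat \<Rightarrow> nat \<Rightarrow> real) \<Rightarrow> (nat \<Rightarrow> nat \<Rightarrow> real) \<Rightarrow> nat \<Rightarrow> nat \<Rightarrow> nat \<Rightarrow> nat \<Rightarrow> real" where
  "Fc m n X A p q a b = (1 / real n) * (X a q * (\<Sum>c<m. X c p * A b c) + (\<Sum>c<m. A a c * X c p) * X b q)"

lemma T1_expand:
  "T1 m n nk X WK WQ W \<tau> a b = (\<Sum>p<n. \<Sum>q<n. W p q * Fc m n X (Amat m n nk X WK WQ \<tau>) p q a b)"
proof -
  define A where "A = Amat m n nk X WK WQ \<tau>"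
  have e1: "(\<Sum>i<n. \<Sum>j<n. \<Sum>c<m. X a i * W j i * X c j * A b c)
      = (\<Sum>p<n. \<Sum>q<n. W p q * (X a q * (\<Sum>c<m. X c p * A b c)))"
    by (subst sum.swap) (simp add: sum_distrib_left mult_ac)
  have e2: "(\<Sum>c<m. \<Sum>i<n. \<Sum>j<n. A a c * X c i * W i j * X b j)
      = (\<Sum>p<n. \<Sum>q<n. W p q * ((\<Sum>c<m. A a c * X c p) * X b q))"
  proof -
    have "(\<Sum>c<m. \<Sum>i<n. \<Sum>j<n. A a c * X c i * W i j * X b j)
        = (\<Sum>i<n. \<Sum>c<m. \<Sum>j<n. A a c * X c i * W i j * X b j)" by (rule sum.swap)
    also have "\<dots> = (\<Sum>i<n. \<Sum>j<n. \<Sum>c<m. A a c * X c i * W i j * X b j)"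
      by (intro sum.cong refl sum.swap)
    also have "\<dots> = (\<Sum>p<n. \<Sum>q<n. W p q * ((\<Sum>c<m. A a c * X c p) * X b q))"
      by (simp add: sum_distrib_left sum_distrib_right mult_ac)
    finally show ?thesis .
  qed
  show ?thesis unfolding T1_def Let_def A_def[symmetric] Fc_def e1 e2
    by (simp add: sum_distrib_left sum.distrib algebra_simps)
qed

definition c0 :: "nat \<Rightarrow> (nat \<Rightarrow> nat \<Rightarrow> real) \<Rightarrow> nat \<Rightarrow> nat \<Rightarrow> nat \<Rightarrow> nat \<Rightarrow> real" where
  "c0 n X p q a b = (1 / real n) * (X a q * X b p + X a p * X b q)"

lemma c0_sum:
  "(\<Sum>p<n. \<Sum>q<n. c0 n X p q a b * c0 n X p q d w)
     = 2 * (Vmat n X a d * Vmat n X b w + Vmat n X a w * Vmat n X b d)"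
proof -
  have h1: "(\<Sum>p<n. \<Sum>q<n. X a q * X b p * X d q * X w p) = (\<Sum>p<n. X b p * X w p) * (\<Sum>q<n. X a q * X d q)"
    unfolding sum_product by (simp add: mult_ac)
  have h2: "(\<Sum>p<n. \<Sum>q<n. X a q * X b p * X d p * X w q) = (\<Sum>p<n. X b p * X d p) * (\<Sum>q<n. X a q * X w q)"
    unfolding sum_product by (simp add: mult_ac)
  have h3: "(\<Sum>p<n. \<Sum>q<n. X a p * X b q * X d q * X w p) = (\<Sum>p<n. X a p * X w p) * (\<Sum>q<n. X b q * X d q)"
    unfolding sum_product by (simp add: mult_ac)
  have h4: "(\<Sum>p<n. \<Sum>q<n. X a p * X b q * X d p * X w q) = (\<Sum>p<n. X a p * X d p) * (\<Sum>q<n. X b q * X w q)"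
    unfolding sum_product by (simp add: mult_ac)
  have "(\<Sum>p<n. \<Sum>q<n. c0 n X p q a b * c0 n X p q d w)
     = (\<Sum>p<n. \<Sum>q<n. (1/real n)^2 * (X a q * X b p * X d q * X w p + X a q * X b p * X d p * X w q
          + X a p * X b q * X d q * X w p + X a p * X b q * X d p * X w q))"
    unfolding c0_def by (intro sum.cong refl) (simp add: power2_eq_square algebra_simps)
  also have "\<dots> = (1/real n)^2 * ((\<Sum>p<n. \<Sum>q<n. X a q * X b p * X d q * X w p) + (\<Sum>p<n. \<Sum>q<n. X a q * X b p * X d p * X w q)
          + (\<Sum>p<n. \<Sum>q<n. X a p * X b q * X d q * X w p) + (\<Sum>p<n. \<Sum>q<n. X a p * X b q * X d p * X w q))"
    by (simp only: distrib_left sum_distrib_left sum.distrib)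
  also have "\<dots> = 2 * (Vmat n X a d * Vmat n X b w + Vmat n X a w * Vmat n X b d)"
    unfolding h1 h2 h3 h4 Vmat_def by (simp add: power2_eq_square algebra_simps)
  finally show ?thesis .
qed

lemma Ymat_cong:
  assumes "\<And>i k. i < n \<Longrightarrow> k < nk \<Longrightarrow> WK i k = WK' i k" "\<And>i k. i < n \<Longrightarrow> k < nk \<Longrightarrow> WQ i k = WQ' i k"
  shows "Ymat n nk X WK WQ = Ymat n nk X WK' WQ'"
  using assms by (auto simp: fun_eq_iff Ymat_def intro!: sum.cong)

lemma Amat_cong:
  assumes "\<And>i k. i < n \<Longrightarrow> k < nk \<Longrightarrow> WK i k = WK' i k" "\<And>i k. i < n \<Longrightarrow> k < nk \<Longrightarrow> WQ i k = WQ' i k"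
  shows "Amat m n nk X WK WQ \<tau> = Amat m n nk X WK' WQ' \<tau>"
  using Ymat_cong[OF assms] by (simp add: Amat_def fun_eq_iff)

lemma softmax_01:
  assumes "b < m" shows "0 < softmax_rows m Z a b" "softmax_rows m Z a b \<le> 1"
proof -
  have "exp (Z a b) \<le> (\<Sum>c<m. exp (Z a c))" using assms by (intro member_le_sum) auto
  moreover have "0 < (\<Sum>c<m. exp (Z a c))" using assms by (intro sum_pos) auto
  ultimately show "0 < softmax_rows m Z a b" "softmax_rows m Z a b \<le> 1"
    by (auto simp: softmax_rows_def)
qed

lemma Dm_bound1:
  assumes "b < m" shows "\<bar>softmax_rows m Z a b - 1 / real m\<bar> \<le> 1"
proof -
  have "0 < 1 / real m" "1 / real m \<le> 1" using assms by auto
  then show ?thesis using softmax_01[OF assms, of Z a] by linarith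
qed

lemma Fc_bound:
  fixes A :: "nat \<Rightarrow> nat \<Rightarrow> real"
  assumes Ab: "\<And>a c. a < m \<Longrightarrow> c < m \<Longrightarrow> \<bar>A a c\<bar> \<le> K"
    and XB: "\<And>i j. i < m \<Longrightarrow> j < n \<Longrightarrow> \<bar>X i j\<bar> \<le> B" and XB2: "\<And>j. j < n \<Longrightarrow> (\<Sum>c<m. \<bar>X c j\<bar>) \<le> B"
    and pq: "p < n" "q < n" and ab: "a < m" "b < m" and n: "n \<ge> 1"
  shows "\<bar>Fc m n X A p q a b\<bar> \<le> 2 * K * B\<^sup>2"
proof -
  have K0: "0 \<le> K" using Ab[of a a] ab by auto
  have B0: "0 \<le> B" using XB[of a p] ab pq by auto
  have s1: "\<bar>\<Sum>c<m. X c p * A b c\<bar> \<le> B * K"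
  proof -
    have "\<bar>\<Sum>c<m. X c p * A b c\<bar> \<le> (\<Sum>c<m. \<bar>X c p\<bar> * K)"
      by (rule order_trans[OF sum_abs]) (auto simp: abs_mult intro!: sum_mono mult_left_mono Ab ab)
    also have "\<dots> = (\<Sum>c<m. \<bar>X c p\<bar>) * K" by (simp add: sum_distrib_right)
    also have "\<dots> \<le> B * K" using XB2[OF pq(1)] K0 by (rule mult_right_mono)
    finally show ?thesis .
  qed
  have s2: "\<bar>\<Sum>c<m. A a c * X c p\<bar> \<le> B * K"
  proof -
    have "\<bar>\<Sum>c<m. A a c * X c p\<bar> \<le> (\<Sum>c<m. \<bar>X c p\<bar> * K)"
      by (rule order_trans[OF sum_abs], rule sum_mono)
         (metis Ab ab(1) abs_ge_zero abs_mult mult.commute mult_right_mono lessThan_iff)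
    also have "\<dots> = (\<Sum>c<m. \<bar>X c p\<bar>) * K" by (simp add: sum_distrib_right)
    also have "\<dots> \<le> B * K" using XB2[OF pq(1)] K0 by (rule mult_right_mono)
    finally show ?thesis .
  qed
  have x1: "\<bar>X a q\<bar> \<le> B" "\<bar>X b q\<bar> \<le> B" using XB ab pq by auto
  have t1: "\<bar>X a q * (\<Sum>c<m. X c p * A b c)\<bar> \<le> B * (B * K)"
    unfolding abs_mult by (intro mult_mono x1 s1) (use B0 K0 in auto)
  have t2: "\<bar>(\<Sum>c<m. A a c * X c p) * X b q\<bar> \<le> (B * K) * B"
    unfolding abs_mult by (intro mult_mono x1 s2) (use B0 K0 in auto)
  have "\<bar>Fc m n X A p q a b\<bar> = (1/real n) * \<bar>X a q * (\<Sum>c<m. X c p * A b c) + (\<Sum>c<m. A a c * X c p) * X b q\<bar>"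
    unfolding Fc_def by (simp add: abs_mult)
  also have "\<dots> \<le> 1 * (B * (B * K) + (B * K) * B)"
  proof (rule mult_mono)
    show "1 / real n \<le> 1" using n by simp
    show "\<bar>X a q * (\<Sum>c<m. X c p * A b c) + (\<Sum>c<m. A a c * X c p) * X b q\<bar> \<le> B * (B * K) + B * K * B"
      using t1 t2 abs_triangle_ineq by (smt (verit))
  qed (use B0 K0 in auto)
  also have "\<dots> = 2 * K * B\<^sup>2" by (simp add: power2_eq_square algebra_simps)
  finally show ?thesis .
qed

lemma Fc_add:
  "Fc m n X (\<lambda>a c. A1 a c + A2 a c) p q a b = Fc m n X A1 p q a b + Fc m n X A2 p q a b"
  unfolding Fc_def by (simp add: sum.distrib algebra_simps)

lemma Fc_id:
  assumes "a < m" "b < m"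
  shows "Fc m n X (\<lambda>a c. if a = c then 1 else 0) p q a b = c0 n X p q a b"
proof -
  have 1: "(\<Sum>c<m. X c p * (if b = c then 1 else 0)) = X b p"
  proof -
    have "(\<Sum>c<m. X c p * (if b = c then 1 else 0)) = (\<Sum>c<m. if b = c then X c p else 0)"
      by (intro sum.cong) auto
    then show ?thesis using assms by simp
  qed
  have 2: "(\<Sum>c<m. (if a = c then 1 else 0) * X c p) = X a p"
  proof -
    have "(\<Sum>c<m. (if a = c then 1 else 0) * X c p) = (\<Sum>c<m. if a = c then X c p else 0)"
      by (intro sum.cong) auto
    then show ?thesis using assms by simp
  qed
  show ?thesis unfolding Fc_def c0_def 1 2 by simp
qed




lemma int_sum3:
  fixes f :: "'i \<Rightarrow> 'j \<Rightarrow> 'k \<Rightarrow> 's \<Rightarrow> real"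
  assumes "\<And>i j k. i \<in> A \<Longrightarrow> j \<in> B \<Longrightarrow> k \<in> C \<Longrightarrow> integrable M (f i j k)"
  shows "integrable M (\<lambda>s. \<Sum>i\<in>A. \<Sum>j\<in>B. \<Sum>k\<in>C. f i j k s)"
    and "(\<integral>s. (\<Sum>i\<in>A. \<Sum>j\<in>B. \<Sum>k\<in>C. f i j k s) \<partial>M) = (\<Sum>i\<in>A. \<Sum>j\<in>B. \<Sum>k\<in>C. integral\<^sup>L M (f i j k))"
  using assms by (simp_all add: Bochner_Integration.integral_sum integrable_sum)

lemma int_sum3_sq:
  fixes f :: "'i \<Rightarrow> 'j \<Rightarrow> 'k \<Rightarrow> 's \<Rightarrow> real"
  assumes "\<And>i j k i' j' k'. i \<in> A \<Longrightarrow> j \<in> B \<Longrightarrow> k \<in> C \<Longrightarrow> i' \<in> A \<Longrightarrow> j' \<in> B \<Longrightarrow> k' \<in> C \<Longrightarrow>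
     integrable M (\<lambda>s. f i j k s * f i' j' k' s)"
  shows "integrable M (\<lambda>s. (\<Sum>i\<in>A. \<Sum>j\<in>B. \<Sum>k\<in>C. f i j k s) * (\<Sum>i\<in>A. \<Sum>j\<in>B. \<Sum>k\<in>C. f i j k s))"
  unfolding sum_distrib_left sum_distrib_right
  using assms by (auto intro!: integrable_sum)

locale tsetup = gsetup M G "gauss_index n nk" for M :: "'s measure" and G and n nk :: nat +
  fixes m :: nat and X :: "nat \<Rightarrow> nat \<Rightarrow> real"
  assumes m1: "m \<ge> 1" and n1: "n \<ge> 1"
begin

definition KQ where "KQ = {GK i k | i k. i < n \<and> k < nk} \<union> {GQ i k | i k. i < n \<and> k < nk}"

lemma KQ_sub: "KQ \<subseteq> gauss_index n nk" by (auto simp: KQ_def gauss_index_def)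
lemma GK_in: "i < n \<Longrightarrow> k < nk \<Longrightarrow> GK i k \<in> gauss_index n nk" by (auto simp: gauss_index_def)
lemma GQ_in: "i < n \<Longrightarrow> k < nk \<Longrightarrow> GQ i k \<in> gauss_index n nk" by (auto simp: gauss_index_def)
lemma GW_in: "i < n \<Longrightarrow> j < n \<Longrightarrow> GW i j \<in> gauss_index n nk" by (auto simp: gauss_index_def)

lemma Rs_meas: "K \<subseteq> gauss_index n nk \<Longrightarrow> (\<lambda>s. restrict (\<lambda>g. G g s) K) \<in> measurable M (PiM K (\<lambda>_. borel))"
  by (rule measurable_restrict) (use Gmeas in auto)

lemma comp_KQ: "h \<in> borel_measurable (PiM KQ (\<lambda>_. borel)) \<Longrightarrow> (\<lambda>s. h (restrict (\<lambda>g. G g s) KQ)) \<in> borel_measurable M"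
  using measurable_compose[OF Rs_meas[OF KQ_sub]] by auto

definition Ax where "Ax \<tau> x = Amat m n nk X (\<lambda>i k. x (GK i k)) (\<lambda>i k. x (GQ i k)) \<tau>"
definition As where "As \<tau> s = Amat m n nk X (\<lambda>i k. G (GK i k) s) (\<lambda>i k. G (GQ i k) s) \<tau>"
definition Ys where "Ys s = Ymat n nk X (\<lambda>i k. G (GK i k) s) (\<lambda>i k. G (GQ i k) s)"
definition Dm where "Dm \<tau> s a c = softmax_rows m (\<lambda>c d. Ys s c d / \<tau>) a c - 1 / real m"
definition rho where "rho s = (\<Sum>a<m. \<Sum>c<m. (Ys s a c)\<^sup>2)"
definition B where "B = (\<Sum>i<m. \<Sum>j<n. \<bar>X i j\<bar>)"

lemma As_eq: "As \<tau> s = Ax \<tau> (restrict (\<lambda>g. G g s) KQ)"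
  unfolding As_def Ax_def by (rule Amat_cong) (auto simp: KQ_def)

lemma As_Dm: "As \<tau> s = (\<lambda>a c. (if a = c then 1 else 0) + Dm \<tau> s a c)"
  by (simp add: fun_eq_iff As_def Amat_def Dm_def Ys_def)

lemma Ax_meas[measurable]: "(\<lambda>x. Ax \<tau> x a b) \<in> borel_measurable (PiM K (\<lambda>_. borel))"
  unfolding Ax_def Amat_def softmax_rows_def Ymat_def by measurable

lemma Fc_Ax_meas[measurable]: "(\<lambda>x. Fc m n X (Ax \<tau> x) p q a b) \<in> borel_measurable (PiM K (\<lambda>_. borel))"
  unfolding Fc_def by measurable

lemma XB: "i < m \<Longrightarrow> j < n \<Longrightarrow> \<bar>X i j\<bar> \<le> B"
proof -
  assume ij: "i < m" "j < n"
  have "\<bar>X i j\<bar> \<le> (\<Sum>j<n. \<bar>X i j\<bar>)" using ij by (intro member_le_sum) auto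
  also have "\<dots> \<le> B" unfolding B_def using ij by (intro member_le_sum[of i]) (auto intro: sum_nonneg)
  finally show ?thesis .
qed

lemma XB2: "j < n \<Longrightarrow> (\<Sum>c<m. \<bar>X c j\<bar>) \<le> B"
proof -
  assume j: "j < n"
  have "(\<Sum>c<m. \<bar>X c j\<bar>) \<le> (\<Sum>c<m. \<Sum>j<n. \<bar>X c j\<bar>)"
    using j by (intro sum_mono member_le_sum) auto
  then show ?thesis by (simp add: B_def)
qed

lemma B0: "0 \<le> B" unfolding B_def by (intro sum_nonneg) auto

lemma Dm_1: "c < m \<Longrightarrow> \<bar>Dm \<tau> s a c\<bar> \<le> 1"
  unfolding Dm_def by (rule Dm_bound1)

lemma Dm_meas: "(\<lambda>s. Dm \<tau> s a c) \<in> borel_measurable M"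
proof -
  have "Dm \<tau> s a c = Ax \<tau> (restrict (\<lambda>g. G g s) KQ) a c - (if a = c then 1 else 0)" for s
    using As_Dm[of \<tau> s] As_eq[of \<tau> s] by (auto simp: fun_eq_iff)
  moreover have "(\<lambda>s. Ax \<tau> (restrict (\<lambda>g. G g s) KQ) a c - (if a = c then 1 else 0)) \<in> borel_measurable M"
    using comp_KQ[of "\<lambda>x. Ax \<tau> x a c"] by measurable
  ultimately show ?thesis by simp
qed

lemma Dm_int: "c < m \<Longrightarrow> integrable M (\<lambda>s. Dm \<tau> s a c)"
  by (rule integrable_const_bound[where B=1]) (use Dm_1 Dm_meas in auto)

lemma term_int: "g \<in> gauss_index n nk \<Longrightarrow> h \<in> gauss_index n nk \<Longrightarrow>
    integrable M (\<lambda>s. c1 * G g s * G h s * c2)"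
proof -
  assume g: "g \<in> gauss_index n nk" and h: "h \<in> gauss_index n nk"
  have "integrable M (\<lambda>s. (c1 * c2) * (G g s * G h s))" using intgg[OF g h] by simp
  moreover have "(\<lambda>s. (c1 * c2) * (G g s * G h s)) = (\<lambda>s. c1 * G g s * G h s * c2)"
    by (simp add: fun_eq_iff mult_ac)
  ultimately show ?thesis by simp
qed

lemma term_mean: "g \<in> gauss_index n nk \<Longrightarrow> h \<in> gauss_index n nk \<Longrightarrow> g \<noteq> h \<Longrightarrow>
    (\<integral>s. c1 * G g s * G h s * c2 \<partial>M) = 0"
proof -
  assume g: "g \<in> gauss_index n nk" and h: "h \<in> gauss_index n nk" and gh: "g \<noteq> h"
  have "(\<lambda>s. c1 * G g s * G h s * c2) = (\<lambda>s. (c1 * c2) * (G g s * G h s))"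
    by (simp add: fun_eq_iff mult_ac)
  then show ?thesis using prod_mean0[OF g h gh] by simp
qed

lemma Ys_expand: "Ys s a c = (1 / real n) * (\<Sum>i<n. \<Sum>j<n. \<Sum>k<nk. X a i * G (GK i k) s * G (GQ j k) s * X c j)"
  unfolding Ys_def Ymat_def ..

lemma Ys_int0: "integrable M (\<lambda>s. \<Sum>i<n. \<Sum>j<n. \<Sum>k<nk. X a i * G (GK i k) s * G (GQ j k) s * X c j)"
proof -
  have *: "\<And>i j k. i \<in> {..<n} \<Longrightarrow> j \<in> {..<n} \<Longrightarrow> k \<in> {..<nk} \<Longrightarrow> integrable M (\<lambda>s. X a i * G (GK i k) s * G (GQ j k) s * X c j)"
    by (intro term_int GK_in GQ_in) auto
  show ?thesis by (rule int_sum3(1)[OF *])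
qed

lemma Ys_int: "integrable M (\<lambda>s. Ys s a c)"
  unfolding Ys_expand using Ys_int0 by simp

lemma Ys_mean: "(\<integral>s. Ys s a c \<partial>M) = 0"
proof -
  have "(\<integral>s. (\<Sum>i<n. \<Sum>j<n. \<Sum>k<nk. X a i * G (GK i k) s * G (GQ j k) s * X c j) \<partial>M) = 0"
  proof -
    have *: "\<And>i j k. i \<in> {..<n} \<Longrightarrow> j \<in> {..<n} \<Longrightarrow> k \<in> {..<nk} \<Longrightarrow> integrable M (\<lambda>s. X a i * G (GK i k) s * G (GQ j k) s * X c j)"
      by (intro term_int GK_in GQ_in) auto
    have "(\<integral>s. (\<Sum>i<n. \<Sum>j<n. \<Sum>k<nk. X a i * G (GK i k) s * G (GQ j k) s * X c j) \<partial>M)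
       = (\<Sum>i<n. \<Sum>j<n. \<Sum>k<nk. (\<integral>s. X a i * G (GK i k) s * G (GQ j k) s * X c j \<partial>M))"
      by (rule int_sum3(2)[OF *])
    also have "\<dots> = 0"
      by (intro sum.neutral ballI term_mean GK_in GQ_in) auto
    finally show ?thesis .
  qed
  then show ?thesis unfolding Ys_expand by simp
qed

lemma quad: "i < n \<Longrightarrow> i' < n \<Longrightarrow> j < n \<Longrightarrow> j' < n \<Longrightarrow> k < nk \<Longrightarrow> k' < nk \<Longrightarrow>
  integrable M (\<lambda>s. (c1 * G (GK i k) s * G (GQ j k) s * c2) * (c3 * G (GK i' k') s * G (GQ j' k') s * c4))"
proof -
  assume r: "i < n" "i' < n" "j < n" "j' < n" "k < nk" "k' < nk"
  have "integrable M (\<lambda>s. (G (GK i k) s * G (GK i' k') s) * (G (GQ j k) s * G (GQ j' k') s))"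
  proof (rule block(1)[where K="{GK i k, GK i' k'}" and L="{GQ j k, GQ j' k'}"
        and f="\<lambda>x. x (GK i k) * x (GK i' k')" and g="\<lambda>x. x (GQ j k) * x (GQ j' k')"])
    show "integrable M (\<lambda>s. G (GK i k) s * G (GK i' k') s)" using r by (intro intgg GK_in)
    show "integrable M (\<lambda>s. G (GQ j k) s * G (GQ j' k') s)" using r by (intro intgg GQ_in)
  qed (use r in \<open>auto simp: gauss_index_def\<close>)
  then have "integrable M (\<lambda>s. (c1*c2*c3*c4) * ((G (GK i k) s * G (GK i' k') s) * (G (GQ j k) s * G (GQ j' k') s)))"
    by simp
  moreover have "(\<lambda>s. (c1*c2*c3*c4) * ((G (GK i k) s * G (GK i' k') s) * (G (GQ j k) s * G (GQ j' k') s)))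
     = (\<lambda>s. (c1 * G (GK i k) s * G (GQ j k) s * c2) * (c3 * G (GK i' k') s * G (GQ j' k') s * c4))"
    by (simp add: fun_eq_iff mult_ac)
  ultimately show ?thesis by simp
qed

lemma Ys_sq_int: "integrable M (\<lambda>s. (Ys s a c)\<^sup>2)"
proof -
  have "integrable M (\<lambda>s. (\<Sum>i<n. \<Sum>j<n. \<Sum>k<nk. X a i * G (GK i k) s * G (GQ j k) s * X c j)
       * (\<Sum>i<n. \<Sum>j<n. \<Sum>k<nk. X a i * G (GK i k) s * G (GQ j k) s * X c j))"
    by (rule int_sum3_sq) (auto intro!: quad)
  then have "integrable M (\<lambda>s. (1 / real n)^2 * ((\<Sum>i<n. \<Sum>j<n. \<Sum>k<nk. X a i * G (GK i k) s * G (GQ j k) s * X c j)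
       * (\<Sum>i<n. \<Sum>j<n. \<Sum>k<nk. X a i * G (GK i k) s * G (GQ j k) s * X c j)))" by simp
  then show ?thesis unfolding Ys_expand by (simp add: power2_eq_square mult_ac)
qed

lemma rho_int: "integrable M rho"
proof -
  have "integrable M (\<lambda>s. \<Sum>a<m. \<Sum>c<m. (Ys s a c)\<^sup>2)"
    using Ys_sq_int by (auto intro!: integrable_sum)
  then show ?thesis unfolding rho_def[abs_def] .
qed

lemma rho_nonneg: "0 \<le> rho s" unfolding rho_def by (intro sum_nonneg) auto

lemma Ys_le: "a < m \<Longrightarrow> d < m \<Longrightarrow> \<bar>Ys s a d\<bar> \<le> sqrt (rho s)"
proof -
  assume ad: "a < m" "d < m"
  have "(Ys s a d)\<^sup>2 \<le> (\<Sum>d<m. (Ys s a d)\<^sup>2)" using ad by (intro member_le_sum) auto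
  also have "\<dots> \<le> rho s" unfolding rho_def using ad
    by (intro member_le_sum[of a]) (auto intro: sum_nonneg)
  finally have "sqrt ((Ys s a d)\<^sup>2) \<le> sqrt (rho s)" by (rule real_sqrt_le_mono)
  then show ?thesis by simp
qed

end



context tsetup begin

definition Lm where "Lm \<tau> s a c = (Ys s a c / \<tau> - (\<Sum>d<m. Ys s a d / \<tau>) / m) / m"

lemma Dm_soft: "Dm \<tau> s a c = exp (Ys s a c / \<tau>) / (\<Sum>d<m. exp (Ys s a d / \<tau>)) - 1 / real m"
  unfolding Dm_def softmax_rows_def ..

lemma zbound: "\<tau> > 0 \<Longrightarrow> a < m \<Longrightarrow> d < m \<Longrightarrow> \<bar>Ys s a d / \<tau>\<bar> \<le> sqrt (rho s) / \<tau>"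
  using Ys_le[of a d s] by (simp add: divide_right_mono)

lemma Dm_pt1: "\<tau> > 0 \<Longrightarrow> a < m \<Longrightarrow> c < m \<Longrightarrow> \<bar>Dm \<tau> s a c\<bar> \<le> 20 * (sqrt (rho s) / \<tau>)"
  unfolding Dm_soft
  by (rule softmax_est(1)[of m c "sqrt (rho s) / \<tau>" "\<lambda>d. Ys s a d / \<tau>"]) (use m1 zbound rho_nonneg in auto)

lemma Dm_pt2: "\<tau> > 0 \<Longrightarrow> a < m \<Longrightarrow> c < m \<Longrightarrow> \<bar>Dm \<tau> s a c - Lm \<tau> s a c\<bar> \<le> 20 * rho s / \<tau>\<^sup>2"
proof -
  assume r: "\<tau> > 0" "a < m" "c < m"
  have "\<bar>Dm \<tau> s a c - Lm \<tau> s a c\<bar> \<le> 20 * (sqrt (rho s) / \<tau>)\<^sup>2"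
    unfolding Dm_soft Lm_def
    by (rule softmax_est(2)[of m c "sqrt (rho s) / \<tau>" "\<lambda>d. Ys s a d / \<tau>"]) (use m1 zbound r rho_nonneg in auto)
  also have "(sqrt (rho s) / \<tau>)\<^sup>2 = rho s / \<tau>\<^sup>2" using rho_nonneg[of s] by (simp add: power_divide)
  finally show ?thesis by simp
qed

lemma Lm_int: "integrable M (\<lambda>s. Lm \<tau> s a c)"
proof -
  have "integrable M (\<lambda>s. \<Sum>d<m. Ys s a d / \<tau>)" using Ys_int by (auto intro!: integrable_sum)
  then show ?thesis unfolding Lm_def using Ys_int by auto
qed

lemma Lm_mean: "(\<integral>s. Lm \<tau> s a c \<partial>M) = 0"
proof -
  have "(\<integral>s. Lm \<tau> s a c \<partial>M) = ((\<integral>s. Ys s a c \<partial>M) / \<tau> - (\<Sum>d<m. (\<integral>s. Ys s a d \<partial>M) / \<tau>) / m) / m"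
    unfolding Lm_def
    by (simp add: Bochner_Integration.integral_diff Bochner_Integration.integral_sum Ys_int integrable_sum)
  then show ?thesis by (simp add: Ys_mean)
qed

lemma Dm_mean: "\<tau> > 0 \<Longrightarrow> a < m \<Longrightarrow> c < m \<Longrightarrow> \<bar>\<integral>s. Dm \<tau> s a c \<partial>M\<bar> \<le> 20 * (\<integral>s. rho s \<partial>M) / \<tau>\<^sup>2"
proof -
  assume r: "\<tau> > 0" "a < m" "c < m"
  have "(\<integral>s. Dm \<tau> s a c \<partial>M) = (\<integral>s. Dm \<tau> s a c - Lm \<tau> s a c \<partial>M) + (\<integral>s. Lm \<tau> s a c \<partial>M)"
    using Dm_int[OF r(3)] Lm_int by (simp add: Bochner_Integration.integral_diff)
  also have "\<dots> = (\<integral>s. Dm \<tau> s a c - Lm \<tau> s a c \<partial>M)" by (simp add: Lm_mean)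
  finally have e: "(\<integral>s. Dm \<tau> s a c \<partial>M) = (\<integral>s. Dm \<tau> s a c - Lm \<tau> s a c \<partial>M)" .
  have "\<bar>\<integral>s. Dm \<tau> s a c - Lm \<tau> s a c \<partial>M\<bar> \<le> (\<integral>s. 20 * rho s / \<tau>\<^sup>2 \<partial>M)"
    by (rule abs_int_le) (use Dm_int[OF r(3)] Lm_int rho_int Dm_pt2[OF r] in auto)
  also have "\<dots> = 20 * (\<integral>s. rho s \<partial>M) / \<tau>\<^sup>2" by simp
  finally show ?thesis unfolding e .
qed

end



lemma int_sum2:
  fixes f :: "'i \<Rightarrow> 'j \<Rightarrow> 's \<Rightarrow> real"
  assumes "\<And>i j. i \<in> A \<Longrightarrow> j \<in> B \<Longrightarrow> integrable M (f i j)"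
  shows "integrable M (\<lambda>s. \<Sum>i\<in>A. \<Sum>j\<in>B. f i j s)"
    and "(\<integral>s. (\<Sum>i\<in>A. \<Sum>j\<in>B. f i j s) \<partial>M) = (\<Sum>i\<in>A. \<Sum>j\<in>B. integral\<^sup>L M (f i j))"
  using assms by (simp_all add: Bochner_Integration.integral_sum integrable_sum)

lemma int_sum4:
  fixes f :: "'i \<Rightarrow> 'j \<Rightarrow> 'k \<Rightarrow> 'l \<Rightarrow> 's \<Rightarrow> real"
  assumes "\<And>i j k l. i \<in> A \<Longrightarrow> j \<in> B \<Longrightarrow> k \<in> C \<Longrightarrow> l \<in> D \<Longrightarrow> integrable M (f i j k l)"
  shows "integrable M (\<lambda>s. \<Sum>i\<in>A. \<Sum>j\<in>B. \<Sum>k\<in>C. \<Sum>l\<in>D. f i j k l s)"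
    and "(\<integral>s. (\<Sum>i\<in>A. \<Sum>j\<in>B. \<Sum>k\<in>C. \<Sum>l\<in>D. f i j k l s) \<partial>M) = (\<Sum>i\<in>A. \<Sum>j\<in>B. \<Sum>k\<in>C. \<Sum>l\<in>D. integral\<^sup>L M (f i j k l))"
  using assms by (simp_all add: Bochner_Integration.integral_sum integrable_sum)

lemma prod_sum2:
  fixes f g :: "'i \<Rightarrow> 'j \<Rightarrow> real"
  shows "(\<Sum>p\<in>A. \<Sum>q\<in>B. f p q) * (\<Sum>r\<in>A. \<Sum>t\<in>B. g r t) = (\<Sum>p\<in>A. \<Sum>q\<in>B. \<Sum>r\<in>A. \<Sum>t\<in>B. f p q * g r t)"
  by (simp only: sum_distrib_right) (simp only: sum_distrib_left)

lemma delta2: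
  fixes h :: "nat \<Rightarrow> nat \<Rightarrow> real"
  assumes "p < n" "q < n"
  shows "(\<Sum>r<n. \<Sum>t<n. (if r = p \<and> t = q then 1 else 0) * h r t) = h p q"
proof -
  have "(\<Sum>r<n. \<Sum>t<n. (if r = p \<and> t = q then 1 else 0) * h r t) = (\<Sum>r<n. if r = p then h r q else 0)"
  proof (intro sum.cong refl)
    fix r assume "r \<in> {..<n}"
    have "(\<Sum>t<n. (if r = p \<and> t = q then 1 else 0) * h r t) = (\<Sum>t<n. if t = q then (if r = p then h r t else 0) else 0)"
      by (intro sum.cong) auto
    also have "\<dots> = (if r = p then h r q else 0)" using assms by simp
    finally show "(\<Sum>t<n. (if r = p \<and> t = q then 1 else 0) * h r t) = (if r = p then h r q else 0)" .
  qed
  also have "\<dots> = h p q" using assms by simp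
  finally show ?thesis .
qed

context tsetup begin

definition Fs where "Fs \<tau> s p q a b = Fc m n X (As \<tau> s) p q a b"
definition ee where "ee \<tau> s p q a b = Fc m n X (Dm \<tau> s) p q a b"

lemma Fs_split: "a < m \<Longrightarrow> b < m \<Longrightarrow> Fs \<tau> s p q a b = c0 n X p q a b + ee \<tau> s p q a b"
  unfolding Fs_def ee_def As_Dm Fc_add by (simp add: Fc_id)

lemma Fs_eq: "Fs \<tau> s p q a b = Fc m n X (Ax \<tau> (restrict (\<lambda>g. G g s) KQ)) p q a b"
  unfolding Fs_def As_eq ..

lemma Fs_meas: "(\<lambda>s. Fs \<tau> s p q a b) \<in> borel_measurable M"
  unfolding Fs_eq by (rule comp_KQ) measurable

lemma As_3: "a < m \<Longrightarrow> c < m \<Longrightarrow> \<bar>As \<tau> s a c\<bar> \<le> 2"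
  using Dm_1[of c \<tau> s a] unfolding As_Dm by auto

lemma Fs_bound: "p < n \<Longrightarrow> q < n \<Longrightarrow> a < m \<Longrightarrow> b < m \<Longrightarrow> \<bar>Fs \<tau> s p q a b\<bar> \<le> 2 * 2 * B\<^sup>2"
  unfolding Fs_def by (rule Fc_bound) (use As_3 XB XB2 n1 in auto)

lemma Fs_int: "p < n \<Longrightarrow> q < n \<Longrightarrow> a < m \<Longrightarrow> b < m \<Longrightarrow> integrable M (\<lambda>s. Fs \<tau> s p q a b)"
  by (rule integrable_const_bound[where B="2*2*B\<^sup>2"]) (use Fs_bound Fs_meas in auto)

lemma FF_int: "p < n \<Longrightarrow> q < n \<Longrightarrow> a < m \<Longrightarrow> b < m \<Longrightarrow> r < n \<Longrightarrow> t < n \<Longrightarrow> d < m \<Longrightarrow> w < m \<Longrightarrow>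
   integrable M (\<lambda>s. Fs \<tau> s p q a b * Fs \<tau> s r t d w)"
proof (rule integrable_const_bound[where B="(2*2*B\<^sup>2) * (2*2*B\<^sup>2)"])
  assume r: "p < n" "q < n" "a < m" "b < m" "r < n" "t < n" "d < m" "w < m"
  show "AE x in M. norm (Fs \<tau> x p q a b * Fs \<tau> x r t d w) \<le> (2*2*B\<^sup>2) * (2*2*B\<^sup>2)"
  proof (rule AE_I2)
    fix x
    have "\<bar>Fs \<tau> x p q a b\<bar> * \<bar>Fs \<tau> x r t d w\<bar> \<le> (2*2*B\<^sup>2) * (2*2*B\<^sup>2)"
      by (intro mult_mono Fs_bound) (use r in auto)
    then show "norm (Fs \<tau> x p q a b * Fs \<tau> x r t d w) \<le> (2*2*B\<^sup>2) * (2*2*B\<^sup>2)"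
      by (simp only: norm_mult real_norm_def abs_mult)
  qed
  show "(\<lambda>s. Fs \<tau> s p q a b * Fs \<tau> s r t d w) \<in> borel_measurable M"
    using Fs_meas by measurable
qed

lemma T1_G: "T1 m n nk X (\<lambda>i k. G (GK i k) s) (\<lambda>i k. G (GQ i k) s) (\<lambda>i j. G (GW i j) s) \<tau> a b
   = (\<Sum>p<n. \<Sum>q<n. G (GW p q) s * Fs \<tau> s p q a b)"
  unfolding T1_expand Fs_def As_def ..

lemma KQ_W: "GW p q \<notin> KQ" by (auto simp: KQ_def)

lemma term1:
  assumes r: "p < n" "q < n" "a < m" "b < m"
  shows "integrable M (\<lambda>s. G (GW p q) s * Fs \<tau> s p q a b)"
    and "(\<integral>s. G (GW p q) s * Fs \<tau> s p q a b \<partial>M) = 0"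
proof -
  have bl: "{GW p q} \<inter> KQ = {}" "{GW p q} \<subseteq> gauss_index n nk" "KQ \<subseteq> gauss_index n nk"
    using KQ_W KQ_sub GW_in r by auto
  note B = block[OF bl, where f="\<lambda>x. x (GW p q)" and g="\<lambda>x. Fc m n X (Ax \<tau> x) p q a b"
      and FA="G (GW p q)" and FB="\<lambda>s. Fs \<tau> s p q a b"]
  have h: "integrable M (G (GW p q))" "integrable M (\<lambda>s. Fs \<tau> s p q a b)"
    using int1 GW_in r Fs_int by auto
  show "integrable M (\<lambda>s. G (GW p q) s * Fs \<tau> s p q a b)"
    by (rule B(1)) (use h in \<open>auto simp: Fs_eq\<close>)
  have "(\<integral>s. G (GW p q) s * Fs \<tau> s p q a b \<partial>M) = (\<integral>s. G (GW p q) s \<partial>M) * (\<integral>s. Fs \<tau> s p q a b \<partial>M)"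
    by (rule B(2)) (use h in \<open>auto simp: Fs_eq\<close>)
  then show "(\<integral>s. G (GW p q) s * Fs \<tau> s p q a b \<partial>M) = 0"
    using mean0[OF GW_in[OF r(1,2)]] by simp
qed

lemma WW_mean: "p < n \<Longrightarrow> q < n \<Longrightarrow> r < n \<Longrightarrow> t < n \<Longrightarrow>
   (\<integral>s. G (GW p q) s * G (GW r t) s \<partial>M) = (if r = p \<and> t = q then 1 else 0)"
  using prod_sq[OF GW_in] prod_mean0[OF GW_in GW_in] by auto

lemma term2:
  assumes r: "p < n" "q < n" "a < m" "b < m" "r < n" "t < n" "d < m" "w < m"
  shows "integrable M (\<lambda>s. (G (GW p q) s * Fs \<tau> s p q a b) * (G (GW r t) s * Fs \<tau> s r t d w))"
    and "(\<integral>s. (G (GW p q) s * Fs \<tau> s p q a b) * (G (GW r t) s * Fs \<tau> s r t d w) \<partial>M)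
        = (if r = p \<and> t = q then 1 else 0) * (\<integral>s. Fs \<tau> s p q a b * Fs \<tau> s r t d w \<partial>M)"
proof -
  have bl: "{GW p q, GW r t} \<inter> KQ = {}" "{GW p q, GW r t} \<subseteq> gauss_index n nk" "KQ \<subseteq> gauss_index n nk"
    using KQ_W KQ_sub GW_in r by auto
  note B = block[OF bl, where f="\<lambda>x. x (GW p q) * x (GW r t)"
      and g="\<lambda>x. Fc m n X (Ax \<tau> x) p q a b * Fc m n X (Ax \<tau> x) r t d w"
      and FA="\<lambda>s. G (GW p q) s * G (GW r t) s" and FB="\<lambda>s. Fs \<tau> s p q a b * Fs \<tau> s r t d w"]
  have h: "integrable M (\<lambda>s. G (GW p q) s * G (GW r t) s)" "integrable M (\<lambda>s. Fs \<tau> s p q a b * Fs \<tau> s r t d w)"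
    using intgg GW_in r FF_int by auto
  have re: "(\<lambda>s. (G (GW p q) s * Fs \<tau> s p q a b) * (G (GW r t) s * Fs \<tau> s r t d w))
      = (\<lambda>s. (G (GW p q) s * G (GW r t) s) * (Fs \<tau> s p q a b * Fs \<tau> s r t d w))"
    by (simp add: fun_eq_iff mult_ac)
  have i: "integrable M (\<lambda>s. (G (GW p q) s * G (GW r t) s) * (Fs \<tau> s p q a b * Fs \<tau> s r t d w))"
    by (rule B(1)) (use h in \<open>auto simp: Fs_eq\<close>)
  then show "integrable M (\<lambda>s. (G (GW p q) s * Fs \<tau> s p q a b) * (G (GW r t) s * Fs \<tau> s r t d w))"
    unfolding re .
  have "(\<integral>s. (G (GW p q) s * G (GW r t) s) * (Fs \<tau> s p q a b * Fs \<tau> s r t d w) \<partial>M)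
      = (\<integral>s. G (GW p q) s * G (GW r t) s \<partial>M) * (\<integral>s. Fs \<tau> s p q a b * Fs \<tau> s r t d w \<partial>M)"
    by (rule B(2)) (use h in \<open>auto simp: Fs_eq\<close>)
  then show "(\<integral>s. (G (GW p q) s * Fs \<tau> s p q a b) * (G (GW r t) s * Fs \<tau> s r t d w) \<partial>M)
        = (if r = p \<and> t = q then 1 else 0) * (\<integral>s. Fs \<tau> s p q a b * Fs \<tau> s r t d w \<partial>M)"
    unfolding re WW_mean[OF r(1,2,5,6)] .
qed

lemma ET1:
  assumes "a < m" "b < m"
  shows "(\<integral>s. T1 m n nk X (\<lambda>i k. G (GK i k) s) (\<lambda>i k. G (GQ i k) s) (\<lambda>i j. G (GW i j) s) \<tau> a b \<partial>M) = 0"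
proof -
  have *: "\<And>p q. p \<in> {..<n} \<Longrightarrow> q \<in> {..<n} \<Longrightarrow> integrable M (\<lambda>s. G (GW p q) s * Fs \<tau> s p q a b)"
    using term1(1) assms by auto
  have "(\<integral>s. (\<Sum>p<n. \<Sum>q<n. G (GW p q) s * Fs \<tau> s p q a b) \<partial>M)
      = (\<Sum>p<n. \<Sum>q<n. (\<integral>s. G (GW p q) s * Fs \<tau> s p q a b \<partial>M))"
    by (rule int_sum2(2)[OF *])
  also have "\<dots> = 0"
    by (intro sum.neutral ballI) (use term1(2) assms in auto)
  finally show ?thesis unfolding T1_G .
qed

lemma ET2:
  assumes r: "a < m" "b < m" "d < m" "w < m"
  shows "(\<integral>s. T1 m n nk X (\<lambda>i k. G (GK i k) s) (\<lambda>i k. G (GQ i k) s) (\<lambda>i j. G (GW i j) s) \<tau> a b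
             * T1 m n nk X (\<lambda>i k. G (GK i k) s) (\<lambda>i k. G (GQ i k) s) (\<lambda>i j. G (GW i j) s) \<tau> d w \<partial>M)
       = (\<Sum>p<n. \<Sum>q<n. \<integral>s. Fs \<tau> s p q a b * Fs \<tau> s p q d w \<partial>M)"
proof -
  have *: "\<And>p q r t. p \<in> {..<n} \<Longrightarrow> q \<in> {..<n} \<Longrightarrow> r \<in> {..<n} \<Longrightarrow> t \<in> {..<n} \<Longrightarrow>
     integrable M (\<lambda>s. (G (GW p q) s * Fs \<tau> s p q a b) * (G (GW r t) s * Fs \<tau> s r t d w))"
    using term2(1) r by auto
  have "(\<integral>s. T1 m n nk X (\<lambda>i k. G (GK i k) s) (\<lambda>i k. G (GQ i k) s) (\<lambda>i j. G (GW i j) s) \<tau> a b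
             * T1 m n nk X (\<lambda>i k. G (GK i k) s) (\<lambda>i k. G (GQ i k) s) (\<lambda>i j. G (GW i j) s) \<tau> d w \<partial>M)
     = (\<Sum>p<n. \<Sum>q<n. \<Sum>r<n. \<Sum>t<n. (\<integral>s. (G (GW p q) s * Fs \<tau> s p q a b) * (G (GW r t) s * Fs \<tau> s r t d w) \<partial>M))"
    unfolding T1_G prod_sum2 by (rule int_sum4(2)[OF *])
  also have "\<dots> = (\<Sum>p<n. \<Sum>q<n. \<Sum>r<n. \<Sum>t<n. (if r = p \<and> t = q then 1 else 0) * (\<integral>s. Fs \<tau> s p q a b * Fs \<tau> s r t d w \<partial>M))"
    by (intro sum.cong refl term2(2)) (use r in auto)
  also have "\<dots> = (\<Sum>p<n. \<Sum>q<n. \<integral>s. Fs \<tau> s p q a b * Fs \<tau> s p q d w \<partial>M)"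
    by (intro sum.cong refl delta2[where h="\<lambda>r t. \<integral>s. Fs \<tau> s _ _ a b * Fs \<tau> s r t d w \<partial>M"]) auto
  finally show ?thesis .
qed

end



context tsetup begin

lemma ee_eq: "a < m \<Longrightarrow> b < m \<Longrightarrow> ee \<tau> s p q a b = Fs \<tau> s p q a b - c0 n X p q a b"
  using Fs_split by simp

lemma ee_meas: "a < m \<Longrightarrow> b < m \<Longrightarrow> (\<lambda>s. ee \<tau> s p q a b) \<in> borel_measurable M"
  using Fs_meas[of \<tau> p q a b] by (simp add: ee_eq)

lemma ee_b1: "p < n \<Longrightarrow> q < n \<Longrightarrow> a < m \<Longrightarrow> b < m \<Longrightarrow> \<bar>ee \<tau> s p q a b\<bar> \<le> 2 * 1 * B\<^sup>2"
  unfolding ee_def by (rule Fc_bound) (use Dm_1 XB XB2 n1 in auto)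

lemma ee_pt: "\<tau> > 0 \<Longrightarrow> p < n \<Longrightarrow> q < n \<Longrightarrow> a < m \<Longrightarrow> b < m \<Longrightarrow>
    \<bar>ee \<tau> s p q a b\<bar> \<le> 2 * (20 * (sqrt (rho s) / \<tau>)) * B\<^sup>2"
  unfolding ee_def by (rule Fc_bound) (use Dm_pt1 XB XB2 n1 in auto)

lemma ee_int: "p < n \<Longrightarrow> q < n \<Longrightarrow> a < m \<Longrightarrow> b < m \<Longrightarrow> integrable M (\<lambda>s. ee \<tau> s p q a b)"
  by (rule integrable_const_bound[where B="2*1*B\<^sup>2"]) (use ee_b1 ee_meas in auto)

lemma ee_mean: "a < m \<Longrightarrow> b < m \<Longrightarrow>
   (\<integral>s. ee \<tau> s p q a b \<partial>M) = Fc m n X (\<lambda>a c. \<integral>s. Dm \<tau> s a c \<partial>M) p q a b"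
proof -
  assume ab: "a < m" "b < m"
  have I1: "integrable M (\<lambda>s. \<Sum>c<m. X c p * Dm \<tau> s b c)" using Dm_int by (auto intro!: integrable_sum)
  have I2: "integrable M (\<lambda>s. \<Sum>c<m. Dm \<tau> s a c * X c p)" using Dm_int by (auto intro!: integrable_sum)
  have E1: "(\<integral>s. (\<Sum>c<m. X c p * Dm \<tau> s b c) \<partial>M) = (\<Sum>c<m. X c p * (\<integral>s. Dm \<tau> s b c \<partial>M))"
    by (subst Bochner_Integration.integral_sum) (auto simp: Dm_int)
  have E2: "(\<integral>s. (\<Sum>c<m. Dm \<tau> s a c * X c p) \<partial>M) = (\<Sum>c<m. (\<integral>s. Dm \<tau> s a c \<partial>M) * X c p)"
    by (subst Bochner_Integration.integral_sum) (auto simp: Dm_int)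
  show ?thesis unfolding ee_def Fc_def
    using I1 I2 by (simp add: Bochner_Integration.integral_add E1 E2)
qed

lemma ee_mean_bound: "\<tau> > 0 \<Longrightarrow> p < n \<Longrightarrow> q < n \<Longrightarrow> a < m \<Longrightarrow> b < m \<Longrightarrow>
   \<bar>\<integral>s. ee \<tau> s p q a b \<partial>M\<bar> \<le> 2 * (20 * (\<integral>s. rho s \<partial>M) / \<tau>\<^sup>2) * B\<^sup>2"
  unfolding ee_mean by (rule Fc_bound) (use Dm_mean XB XB2 n1 in auto)

lemma c0_bound: "p < n \<Longrightarrow> q < n \<Longrightarrow> a < m \<Longrightarrow> b < m \<Longrightarrow> \<bar>c0 n X p q a b\<bar> \<le> 2 * 1 * B\<^sup>2"
proof -
  assume r: "p < n" "q < n" "a < m" "b < m"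
  have "\<bar>Fc m n X (\<lambda>a c. if a = c then 1 else 0) p q a b\<bar> \<le> 2 * 1 * B\<^sup>2"
    by (rule Fc_bound) (use XB XB2 n1 r in auto)
  then show ?thesis using Fc_id r by simp
qed

lemma rho_mean_nonneg: "0 \<le> (\<integral>s. rho s \<partial>M)"
  using rho_nonneg by (simp add: Bochner_Integration.integral_nonneg)

lemma arith_bound:
  fixes x x' u v w B E :: real
  assumes "\<bar>x\<bar> \<le> 2*1*B\<^sup>2" "\<bar>x'\<bar> \<le> 2*1*B\<^sup>2" "\<bar>u\<bar> \<le> 2*(20*E)*B\<^sup>2" "\<bar>v\<bar> \<le> 2*(20*E)*B\<^sup>2"
    "\<bar>w\<bar> \<le> 1600 * B^4 * E" "0 \<le> E"
  shows "\<bar>x * u + x' * v + w\<bar> \<le> 1760 * B^4 * E"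
proof -
  have "\<bar>x * u\<bar> \<le> (2*1*B\<^sup>2) * (2*(20*E)*B\<^sup>2)" unfolding abs_mult
    by (intro mult_mono assms) auto
  moreover have "\<bar>x' * v\<bar> \<le> (2*1*B\<^sup>2) * (2*(20*E)*B\<^sup>2)" unfolding abs_mult
    by (intro mult_mono assms) auto
  moreover have "(2*1*B\<^sup>2) * (2*(20*E)*B\<^sup>2) = 80 * B^4 * E"
    by (simp add: power2_eq_square power4_eq_xxxx)
  moreover have "\<bar>x * u + x' * v + w\<bar> \<le> \<bar>x * u\<bar> + \<bar>x' * v\<bar> + \<bar>w\<bar>" by linarith
  ultimately show ?thesis using assms(5) by linarith
qed

lemma term_bound:
  assumes r: "\<tau> > 0" "p < n" "q < n" "a < m" "b < m" "d < m" "w < m"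
  shows "\<bar>(\<integral>s. Fs \<tau> s p q a b * Fs \<tau> s p q d w \<partial>M) - c0 n X p q a b * c0 n X p q d w\<bar>
      \<le> 1760 * B^4 * ((\<integral>s. rho s \<partial>M) / \<tau>\<^sup>2)"
proof -
  define x where "x = c0 n X p q a b"
  define x' where "x' = c0 n X p q d w"
  have iee: "integrable M (\<lambda>s. ee \<tau> s p q a b * ee \<tau> s p q d w)"
  proof (rule integrable_const_bound[where B="(2*1*B\<^sup>2) * (2*1*B\<^sup>2)"])
    show "AE s in M. norm (ee \<tau> s p q a b * ee \<tau> s p q d w) \<le> (2*1*B\<^sup>2) * (2*1*B\<^sup>2)"
    proof (rule AE_I2)
      fix s
      have "\<bar>ee \<tau> s p q a b\<bar> * \<bar>ee \<tau> s p q d w\<bar> \<le> (2*1*B\<^sup>2) * (2*1*B\<^sup>2)"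
        by (intro mult_mono ee_b1) (use r in auto)
      then show "norm (ee \<tau> s p q a b * ee \<tau> s p q d w) \<le> (2*1*B\<^sup>2) * (2*1*B\<^sup>2)"
        by (simp only: norm_mult real_norm_def abs_mult)
    qed
    show "(\<lambda>s. ee \<tau> s p q a b * ee \<tau> s p q d w) \<in> borel_measurable M"
      using ee_meas[of a b \<tau> p q] ee_meas[of d w \<tau> p q] r by measurable
  qed
  have i1: "integrable M (\<lambda>s. ee \<tau> s p q a b)" "integrable M (\<lambda>s. ee \<tau> s p q d w)"
    using ee_int r by auto
  have "(\<lambda>s. Fs \<tau> s p q a b * Fs \<tau> s p q d w)
     = (\<lambda>s. x * x' + (x * ee \<tau> s p q d w + (x' * ee \<tau> s p q a b + ee \<tau> s p q a b * ee \<tau> s p q d w)))"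
    using r by (auto simp: fun_eq_iff Fs_split x_def x'_def algebra_simps)
  then have "(\<integral>s. Fs \<tau> s p q a b * Fs \<tau> s p q d w \<partial>M)
     = x * x' + (x * (\<integral>s. ee \<tau> s p q d w \<partial>M) + (x' * (\<integral>s. ee \<tau> s p q a b \<partial>M) + (\<integral>s. ee \<tau> s p q a b * ee \<tau> s p q d w \<partial>M)))"
    using i1 iee by (simp add: Bochner_Integration.integral_add prob_space)
  then have e: "(\<integral>s. Fs \<tau> s p q a b * Fs \<tau> s p q d w \<partial>M) - x * x'
     = x * (\<integral>s. ee \<tau> s p q d w \<partial>M) + x' * (\<integral>s. ee \<tau> s p q a b \<partial>M) + (\<integral>s. ee \<tau> s p q a b * ee \<tau> s p q d w \<partial>M)"
    by simp
  have w: "\<bar>\<integral>s. ee \<tau> s p q a b * ee \<tau> s p q d w \<partial>M\<bar> \<le> 1600 * B^4 * ((\<integral>s. rho s \<partial>M) / \<tau>\<^sup>2)"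
  proof -
    have "\<bar>\<integral>s. ee \<tau> s p q a b * ee \<tau> s p q d w \<partial>M\<bar> \<le> (\<integral>s. 1600 * B^4 * (rho s / \<tau>\<^sup>2) \<partial>M)"
    proof (rule abs_int_le[OF iee])
      show "integrable M (\<lambda>s. 1600 * B^4 * (rho s / \<tau>\<^sup>2))" using rho_int by simp
      fix s
      have "\<bar>ee \<tau> s p q a b\<bar> * \<bar>ee \<tau> s p q d w\<bar> \<le> (2 * (20 * (sqrt (rho s) / \<tau>)) * B\<^sup>2) * (2 * (20 * (sqrt (rho s) / \<tau>)) * B\<^sup>2)"
        by (intro mult_mono ee_pt) (use r rho_nonneg in auto)
      also have "\<dots> = 1600 * B^4 * ((sqrt (rho s))\<^sup>2 / \<tau>\<^sup>2)"
        by (simp add: power2_eq_square power4_eq_xxxx field_simps)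
      also have "(sqrt (rho s))\<^sup>2 = rho s" using rho_nonneg by simp
      finally show "\<bar>ee \<tau> s p q a b * ee \<tau> s p q d w\<bar> \<le> 1600 * B^4 * (rho s / \<tau>\<^sup>2)"
        by (simp add: abs_mult)
    qed
    also have "\<dots> = 1600 * B^4 * ((\<integral>s. rho s \<partial>M) / \<tau>\<^sup>2)" by simp
    finally show ?thesis .
  qed
  have "\<bar>x * (\<integral>s. ee \<tau> s p q d w \<partial>M) + x' * (\<integral>s. ee \<tau> s p q a b \<partial>M) + (\<integral>s. ee \<tau> s p q a b * ee \<tau> s p q d w \<partial>M)\<bar>
      \<le> 1760 * B^4 * ((\<integral>s. rho s \<partial>M) / \<tau>\<^sup>2)"
    by (rule arith_bound) (use c0_bound ee_mean_bound w rho_mean_nonneg r in \<open>auto simp: x_def x'_def\<close>)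
  then show ?thesis unfolding x_def[symmetric] x'_def[symmetric] e .
qed

lemma ET2_bound:
  assumes r: "\<tau> > 0" "a < m" "b < m" "d < m" "w < m"
  shows "\<bar>(\<integral>s. T1 m n nk X (\<lambda>i k. G (GK i k) s) (\<lambda>i k. G (GQ i k) s) (\<lambda>i j. G (GW i j) s) \<tau> a b
             * T1 m n nk X (\<lambda>i k. G (GK i k) s) (\<lambda>i k. G (GQ i k) s) (\<lambda>i j. G (GW i j) s) \<tau> d w \<partial>M)
         - 2 * (Vmat n X a d * Vmat n X b w + Vmat n X a w * Vmat n X b d)\<bar>
       \<le> real n * real n * (1760 * B^4 * ((\<integral>s. rho s \<partial>M) / \<tau>\<^sup>2))"
proof -
  have "\<bar>(\<Sum>p<n. \<Sum>q<n. \<integral>s. Fs \<tau> s p q a b * Fs \<tau> s p q d w \<partial>M) - (\<Sum>p<n. \<Sum>q<n. c0 n X p q a b * c0 n X p q d w)\<bar>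
      = \<bar>\<Sum>p<n. \<Sum>q<n. ((\<integral>s. Fs \<tau> s p q a b * Fs \<tau> s p q d w \<partial>M) - c0 n X p q a b * c0 n X p q d w)\<bar>"
    by (simp add: sum_subtractf)
  also have "\<dots> \<le> (\<Sum>p<n. \<Sum>q<n. \<bar>(\<integral>s. Fs \<tau> s p q a b * Fs \<tau> s p q d w \<partial>M) - c0 n X p q a b * c0 n X p q d w\<bar>)"
    by (rule order_trans[OF sum_abs]) (intro sum_mono sum_abs)
  also have "\<dots> \<le> (\<Sum>p<n. \<Sum>q<n. 1760 * B^4 * ((\<integral>s. rho s \<partial>M) / \<tau>\<^sup>2))"
    by (intro sum_mono term_bound) (use r in auto)
  also have "\<dots> = real n * real n * (1760 * B^4 * ((\<integral>s. rho s \<partial>M) / \<tau>\<^sup>2))" by simp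
  finally show ?thesis unfolding ET2[OF r(2-5)] c0_sum .
qed

end

theorem lemmaC6:
  fixes M :: "'s measure" and G :: "gidx \<Rightarrow> 's \<Rightarrow> real"
    and X :: "nat \<Rightarrow> nat \<Rightarrow> real" and m n nk \<alpha> \<beta> \<delta> \<omega> :: nat
  assumes "prob_space M"
    and "m \<ge> 1" and "n \<ge> 1" and "nk \<ge> 1"
    and "prob_space.indep_vars M (\<lambda>_. borel) G (gauss_index n nk)"
    and "\<forall>g\<in>gauss_index n nk. distributed M lborel (G g) std_normal_density"
    and "\<alpha> < m" and "\<beta> < m" and "\<delta> < m" and "\<omega> < m"
  shows "(\<forall>\<tau>>0. (\<integral>s. T1 m n nk X (\<lambda>i k. G (GK i k) s) (\<lambda>i k. G (GQ i k) s)
                        (\<lambda>i j. G (GW i j) s) \<tau> \<alpha> \<beta> \<partial>M) = 0)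
     \<and> (\<exists>C. \<forall>\<^sub>F \<tau> in at_top.
          \<bar>(\<integral>s. T1 m n nk X (\<lambda>i k. G (GK i k) s) (\<lambda>i k. G (GQ i k) s)
                        (\<lambda>i j. G (GW i j) s) \<tau> \<alpha> \<beta>
                 * T1 m n nk X (\<lambda>i k. G (GK i k) s) (\<lambda>i k. G (GQ i k) s)
                        (\<lambda>i j. G (GW i j) s) \<tau> \<delta> \<omega> \<partial>M)
           - 2 * (Vmat n X \<alpha> \<delta> * Vmat n X \<beta> \<omega> + Vmat n X \<alpha> \<omega> * Vmat n X \<beta> \<delta>)\<bar>
          \<le> C * real nk / \<tau>\<^sup>2)"
proof -
  have TS: "tsetup M G n nk m"
    unfolding tsetup_def gsetup_def gsetup_axioms_def tsetup_axioms_def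
    using assms by blast
  interpret T: tsetup M G n nk m X by (rule TS)
  define C where "C = real n * real n * (1760 * T.B^4 * (\<integral>s. T.rho s \<partial>M))"
  have C0: "0 \<le> C" unfolding C_def using T.rho_mean_nonneg by simp
  have "\<forall>\<^sub>F \<tau> in at_top.
          \<bar>(\<integral>s. T1 m n nk X (\<lambda>i k. G (GK i k) s) (\<lambda>i k. G (GQ i k) s)
                        (\<lambda>i j. G (GW i j) s) \<tau> \<alpha> \<beta>
                 * T1 m n nk X (\<lambda>i k. G (GK i k) s) (\<lambda>i k. G (GQ i k) s)
                        (\<lambda>i j. G (GW i j) s) \<tau> \<delta> \<omega> \<partial>M)
           - 2 * (Vmat n X \<alpha> \<delta> * Vmat n X \<beta> \<omega> + Vmat n X \<alpha> \<omega> * Vmat n X \<beta> \<delta>)\<bar>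
          \<le> C * real nk / \<tau>\<^sup>2"
    using eventually_gt_at_top[of "0::real"]
  proof (rule eventually_mono)
    fix \<tau> :: real assume t: "0 < \<tau>"
    have cmp: "C / \<tau>\<^sup>2 \<le> C * real nk / \<tau>\<^sup>2"
      using C0 assms(4) t by (intro divide_right_mono) (auto intro: mult_le_cancel_left1[THEN iffD2])
    have e1: "real n * real n * (1760 * T.B^4 * ((\<integral>s. T.rho s \<partial>M) / \<tau>\<^sup>2)) = C / \<tau>\<^sup>2"
      unfolding C_def by simp
    show "\<bar>(\<integral>s. T1 m n nk X (\<lambda>i k. G (GK i k) s) (\<lambda>i k. G (GQ i k) s)
                        (\<lambda>i j. G (GW i j) s) \<tau> \<alpha> \<beta>
                 * T1 m n nk X (\<lambda>i k. G (GK i k) s) (\<lambda>i k. G (GQ i k) s)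
                        (\<lambda>i j. G (GW i j) s) \<tau> \<delta> \<omega> \<partial>M)
           - 2 * (Vmat n X \<alpha> \<delta> * Vmat n X \<beta> \<omega> + Vmat n X \<alpha> \<omega> * Vmat n X \<beta> \<delta>)\<bar>
          \<le> C * real nk / \<tau>\<^sup>2"
      by (rule order_trans[OF T.ET2_bound[OF t assms(7-10)]]) (unfold e1, rule cmp)
  qed
  moreover have "\<forall>\<tau>>0. (\<integral>s. T1 m n nk X (\<lambda>i k. G (GK i k) s) (\<lambda>i k. G (GQ i k) s)
                        (\<lambda>i j. G (GW i j) s) \<tau> \<alpha> \<beta> \<partial>M) = 0"
    using T.ET1[OF assms(7,8)] by simp
  ultimately show ?thesis by blast
qed



end
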